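(* Under the full correlation model $\mathtt{FC}$, given $n$, $m$ and a scoring vector $s$, a vector $k=(k_1,\ldots,k_n)$ of non-negative integers with $\sum_i k_i=m$ maximizing the egalitarian social welfare $SW^e_{\mathtt{FC}}(k)$, and one maximizing the Nash social welfare $SW^n_{\mathtt{FC}}(k)$, can each be computed in $O(nm^2)$ time.
   Context: There are $n$ agents $a_1,\ldots,a_n$ and $m$ items. A preference profile assigns to each agent a strict ranking of the items. A scoring vector is $s=(s_1,\ldots,s_m)$ of non-negative rationals with $s_1\ge\cdots\ge s_m$; an agent's value for her $j$-th preferred item is $s_j$, and utilities are additive. Given $k=(k_1,\ldots,k_n)$ with non-negative integer entries summing to $m$, agent $a_1$ first picks $k_1$ items, then $a_2$ picks $k_2$ of the remaining items, etc., each agent greedily picking her most preferred remaining items. $EU^k_\Psi(a)$ is the expected total score received by $a$ when the profile is drawn from $\Psi$. Social welfare: utilitarian $SW^u_\Psi(k)=\sum_a EU^k_\Psi(a)$, egalitarian $SW^e_\Psi(k)=\min_a EU^k_\Psi(a)$, Nash $SW^n_\Psi(k)=\prod_a EU^k_\Psi(a)$. Model $\mathtt{FC}$ (full correlation): all agents have the same ranking. *)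

theory Defs
  imports Main "HOL-Combinatorics.Multiset_Permutations"
begin

text \<open>Items are 0..<m, agents are 0..<n (agent a here is a_(a+1) of the paper).
A scoring vector is a list s of length m, s ! j is the score of the (j+1)-th
preferred item. A ranking is a list of all items, most preferred first.\<close>

definition scoring_vector :: "rat list \<Rightarrow> bool" where
  "scoring_vector s \<longleftrightarrow> (\<forall>x\<in>set s. 0 \<le> x) \<and> sorted_wrt (\<ge>) s"

definition is_ranking :: "nat \<Rightarrow> nat list \<Rightarrow> bool" where
  "is_ranking m r \<longleftrightarrow> r \<in> permutations_of_set {0..<m}"

definition is_pick_vector :: "nat \<Rightarrow> nat \<Rightarrow> nat list \<Rightarrow> bool" where
  "is_pick_vector n m k \<longleftrightarrow> length k = n \<and> sum_list k = m"

fun picking :: "nat list \<Rightarrow> nat list list \<Rightarrow> nat set \<Rightarrow> nat set list" where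
  "picking (ki # ks) (r # rs) R =
     (let B = set (take ki (filter (\<lambda>x. x \<in> R) r)) in B # picking ks rs (R - B))"
| "picking _ _ _ = []"

definition utility :: "rat list \<Rightarrow> nat list list \<Rightarrow> nat list \<Rightarrow> nat \<Rightarrow> rat" where
  "utility s P k a =
     (let m = length s; B = picking k P {0..<m} ! a
      in (\<Sum>j<m. if (P ! a) ! j \<in> B then s ! j else 0))"

text \<open>Expected utility under the full correlation model FC: a single ranking,
drawn uniformly at random, is shared by all n agents.\<close>
definition EU_FC :: "nat \<Rightarrow> rat list \<Rightarrow> nat list \<Rightarrow> nat \<Rightarrow> rat" where
  "EU_FC n s k a =
     (let m = length s; Rs = permutations_of_set {0..<m}
      in (\<Sum>r\<in>Rs. utility s (replicate n r) k a) / of_nat (card Rs))"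

definition SW_e_FC :: "nat \<Rightarrow> rat list \<Rightarrow> nat list \<Rightarrow> rat" where
  "SW_e_FC n s k = Min ((\<lambda>a. EU_FC n s k a) ` {0..<n})"

definition SW_n_FC :: "nat \<Rightarrow> rat list \<Rightarrow> nat list \<Rightarrow> rat" where
  "SW_n_FC n s k = (\<Prod>a<n. EU_FC n s k a)"

text \<open>Running time is measured in the standard step-counting model (as in the
time framework of HOL-Library): each call of a defined function costs 1 plus the
cost of the calls it makes; constructors, pattern matching and arithmetic /
comparison operations on rationals (min, +, *, <) are unit-cost primitives counted
as 0 (absorbed in the +1 of the enclosing call). Each T_f below is the time function
of f, written by hand following that translation (every auxiliary call, including
the selector fst, is charged).\<close>

text \<open>Flag True: egalitarian (combine with min); False: Nash (combine with product).\<close>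
fun comb :: "bool \<Rightarrow> rat \<Rightarrow> rat \<Rightarrow> rat" where
  "comb b x y = (if b then min x y else x * y)"

fun T_comb :: "bool \<Rightarrow> rat \<Rightarrow> rat \<Rightarrow> nat" where
  "T_comb b x y = 1"

text \<open>Row for the last agent: entry j (for the suffix drop j s) is
(value of taking all remaining items, [number of remaining items]).\<close>
fun last_row :: "rat list \<Rightarrow> (rat \<times> nat list) list" where
  "last_row [] = [(0, [0])]"
| "last_row (x # xs) =
     (case last_row xs of
        (v, c # cs) # R \<Rightarrow> (x + v, [Suc c]) # (v, c # cs) # R
      | _ \<Rightarrow> [])"

fun T_last_row :: "rat list \<Rightarrow> nat" where
  "T_last_row [] = 1"
| "T_last_row (x # xs) = T_last_row xs + 1"

fun best :: "bool \<Rightarrow> rat \<Rightarrow> nat \<Rightarrow> rat list \<Rightarrow> (rat \<times> nat list) list \<Rightarrow> rat \<times> nat list" where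
  "best b a t [] ((v, ks) # R) = (comb b a v, t # ks)"
| "best b a t (x # xs) ((v, ks) # R) =
     (let c = (comb b a v, t # ks);
          d = best b (a + x) (Suc t) xs R
      in if fst c < fst d then d else c)"
| "best b a t _ [] = (0, [])"

fun T_best :: "bool \<Rightarrow> rat \<Rightarrow> nat \<Rightarrow> rat list \<Rightarrow> (rat \<times> nat list) list \<Rightarrow> nat" where
  "T_best b a t [] ((v, ks) # R) = T_comb b a v + 1"
| "T_best b a t (x # xs) ((v, ks) # R) =
     T_comb b a v + T_best b (a + x) (Suc t) xs R + 2 + 1"
| "T_best b a t _ [] = 1"

fun next_row :: "bool \<Rightarrow> rat list \<Rightarrow> (rat \<times> nat list) list \<Rightarrow> (rat \<times> nat list) list" where
  "next_row b [] R = [best b 0 0 [] R]"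
| "next_row b (x # xs) (r # R) = best b 0 0 (x # xs) (r # R) # next_row b xs R"
| "next_row b (x # xs) [] = []"

fun T_next_row :: "bool \<Rightarrow> rat list \<Rightarrow> (rat \<times> nat list) list \<Rightarrow> nat" where
  "T_next_row b [] R = T_best b 0 0 [] R + 1"
| "T_next_row b (x # xs) (r # R) = T_best b 0 0 (x # xs) (r # R) + T_next_row b xs R + 1"
| "T_next_row b (x # xs) [] = 1"

fun iter_rows :: "bool \<Rightarrow> nat \<Rightarrow> rat list \<Rightarrow> (rat \<times> nat list) list \<Rightarrow> (rat \<times> nat list) list" where
  "iter_rows b 0 s R = R"
| "iter_rows b (Suc i) s R = iter_rows b i s (next_row b s R)"

fun T_iter_rows :: "bool \<Rightarrow> nat \<Rightarrow> rat list \<Rightarrow> (rat \<times> nat list) list \<Rightarrow> nat" where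
  "T_iter_rows b 0 s R = 1"
| "T_iter_rows b (Suc i) s R = T_next_row b s R + T_iter_rows b i s (next_row b s R) + 1"

fun first_choice :: "(rat \<times> nat list) list \<Rightarrow> nat list" where
  "first_choice ((v, ks) # R) = ks"
| "first_choice [] = []"

fun T_first_choice :: "(rat \<times> nat list) list \<Rightarrow> nat" where
  "T_first_choice R = 1"

fun opt_pick :: "bool \<Rightarrow> nat \<Rightarrow> rat list \<Rightarrow> nat list" where
  "opt_pick b n s = first_choice (iter_rows b (n - 1) s (last_row s))"

fun T_opt_pick :: "bool \<Rightarrow> nat \<Rightarrow> rat list \<Rightarrow> nat" where
  "T_opt_pick b n s =
     T_last_row s + T_iter_rows b (n - 1) s (last_row s)
     + T_first_choice (iter_rows b (n - 1) s (last_row s)) + 1"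

end

theory Submission
  imports Defs
begin

fun W :: "bool \<Rightarrow> rat list \<Rightarrow> nat list \<Rightarrow> rat" where
  "W b xs [] = 0"
| "W b xs [k] = sum_list (take k xs)"
| "W b xs (k # k' # ks) = comb b (sum_list (take k xs)) (W b (drop k xs) (k' # ks))"

lemma W_cons: "ks \<noteq> [] \<Longrightarrow> W b xs (k # ks) = comb b (sum_list (take k xs)) (W b (drop k xs) ks)"
  by (cases ks) auto

definition seg :: "rat list \<Rightarrow> nat list \<Rightarrow> nat \<Rightarrow> rat" where
  "seg xs k a = sum_list (take (k ! a) (drop (sum_list (take a k)) xs))"

lemma seg_0: "seg xs (k # ks) 0 = sum_list (take k xs)"
  by (simp add: seg_def)

lemma seg_Suc: "seg xs (k # ks) (Suc a) = seg (drop k xs) ks a"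
  by (simp add: seg_def add.commute)

lemma W_min: "ks \<noteq> [] \<Longrightarrow> W True xs ks = Min ((\<lambda>a. seg xs ks a) ` {..<length ks})"
proof (induction ks arbitrary: xs)
  case Nil thus ?case by simp
next
  case (Cons k ks)
  show ?case
  proof (cases "ks = []")
    case True thus ?thesis by (simp add: seg_0 lessThan_Suc)
  next
    case False
    have "(\<lambda>a. seg xs (k # ks) a) ` {..<length (k # ks)}
        = insert (seg xs (k#ks) 0) ((\<lambda>a. seg (drop k xs) ks a) ` {..<length ks})"
      by (simp add: lessThan_Suc_eq_insert_0 image_image seg_Suc)
    moreover have "finite ((\<lambda>a. seg (drop k xs) ks a) ` {..<length ks})" by simp
    moreover have "(\<lambda>a. seg (drop k xs) ks a) ` {..<length ks} \<noteq> {}" using False by (simp add: lessThan_empty_iff)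
    ultimately show ?thesis using Cons False by (simp add: W_cons seg_0)
  qed
qed

lemma W_prod: "ks \<noteq> [] \<Longrightarrow> W False xs ks = (\<Prod>a<length ks. seg xs ks a)"
proof (induction ks arbitrary: xs)
  case Nil thus ?case by simp
next
  case (Cons k ks)
  show ?case
  proof (cases "ks = []")
    case True thus ?thesis by (simp add: seg_0)
  next
    case False
    show ?thesis using Cons False
      by (simp add: W_cons seg_0 prod.lessThan_Suc_shift seg_Suc del: prod.lessThan_Suc)
  qed
qed

fun segs :: "nat list \<Rightarrow> nat \<Rightarrow> nat list \<Rightarrow> nat set list" where
  "segs [] p r = []"
| "segs (k # ks) p r = set (take k (drop p r)) # segs ks (p + k) r"

lemma filter_drop: "distinct r \<Longrightarrow> filter (\<lambda>x. x \<in> set (drop p r)) r = drop p r"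
proof -
  assume d: "distinct r"
  have "r = take p r @ drop p r" by simp
  then have "filter (\<lambda>x. x \<in> set (drop p r)) r
      = filter (\<lambda>x. x \<in> set (drop p r)) (take p r) @ filter (\<lambda>x. x \<in> set (drop p r)) (drop p r)"
    by (metis filter_append)
  also have "filter (\<lambda>x. x \<in> set (drop p r)) (take p r) = []"
    using set_take_disj_set_drop_if_distinct[OF d, of p p] by (auto simp: filter_empty_conv)
  also have "filter (\<lambda>x. x \<in> set (drop p r)) (drop p r) = drop p r" by simp
  finally show ?thesis by simp
qed

lemma set_drop_diff: "distinct l \<Longrightarrow> set l - set (take k l) = set (drop k l)"
proof -
  assume d: "distinct l"
  have "l = take k l @ drop k l" by simp
  then have "set l = set (take k l) \<union> set (drop k l)" by (metis set_append)
  moreover have "set (take k l) \<inter> set (drop k l) = {}"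
    using set_take_disj_set_drop_if_distinct[OF d, of k k] by simp
  ultimately show ?thesis by blast
qed

lemma picking_segs:
  "distinct r \<Longrightarrow> picking ks (replicate (length ks) r) (set (drop p r)) = segs ks p r"
proof (induction ks arbitrary: p)
  case Nil thus ?case by simp
next
  case (Cons k ks)
  have "set (drop p r) - set (take k (drop p r)) = set (drop (p + k) r)"
    using set_drop_diff[of "drop p r" k] Cons.prems by (simp add: add.commute)
  thus ?case using Cons by (simp add: filter_drop Let_def)
qed

lemma segs_nth: "a < length ks \<Longrightarrow> segs ks p r ! a = set (take (ks ! a) (drop (p + sum_list (take a ks)) r))"
proof (induction ks arbitrary: p a)
  case Nil thus ?case by simp
next
  case (Cons k ks)
  thus ?case by (cases a) (auto simp: add.assoc)
qed

lemma mem_seg: "distinct r \<Longrightarrow> j < length r \<Longrightarrow>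
  (r ! j \<in> set (take K (drop P r))) = (P \<le> j \<and> j < P + K)"
proof -
  assume d: "distinct r" and j: "j < length r"
  have "(r ! j \<in> set (take K (drop P r))) = (\<exists>i < length (take K (drop P r)). take K (drop P r) ! i = r ! j)"
    by (auto simp: in_set_conv_nth)
  also have "\<dots> = (\<exists>i. i < K \<and> P + i < length r \<and> r ! (P + i) = r ! j)"
  proof
    assume "\<exists>i < length (take K (drop P r)). take K (drop P r) ! i = r ! j"
    then obtain i where "i < length (take K (drop P r))" "take K (drop P r) ! i = r ! j" by blast
    thus "\<exists>i. i < K \<and> P + i < length r \<and> r ! (P + i) = r ! j" by (intro exI[of _ i]) auto
  next
    assume "\<exists>i. i < K \<and> P + i < length r \<and> r ! (P + i) = r ! j"
    then obtain i where "i < K" "P + i < length r" "r ! (P + i) = r ! j" by blast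
    thus "\<exists>i < length (take K (drop P r)). take K (drop P r) ! i = r ! j" by (intro exI[of _ i]) auto
  qed
  also have "\<dots> = (\<exists>i. i < K \<and> P + i < length r \<and> P + i = j)"
    using d j by (metis nth_eq_iff_index_eq)
  also have "\<dots> = (P \<le> j \<and> j < P + K)" using j
    by (auto intro!: exI[of _ "j - P"])
  finally show ?thesis .
qed

lemma sum_take_drop:
  "sum_list (take K (drop P s)) = (\<Sum>j<length s. if P \<le> j \<and> j < P + K then s ! j else 0)"
proof (induction s arbitrary: P K)
  case Nil thus ?case by simp
next
  case (Cons x s)
  show ?case
  proof (cases P)
    case 0
    show ?thesis
    proof (cases K)
      case 0 thus ?thesis using \<open>P = 0\<close> by simp
    next
      case (Suc K')
      have "sum_list (take K' (drop 0 s)) = (\<Sum>j<length s. if 0 \<le> j \<and> j < 0 + K' then s ! j else 0)"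
        using Cons.IH by blast
      thus ?thesis using \<open>P = 0\<close> Suc by (simp add: sum.lessThan_Suc_shift del: sum.lessThan_Suc cong: if_cong)
    qed
  next
    case (Suc P')
    have "sum_list (take K (drop P' s)) = (\<Sum>j<length s. if P' \<le> j \<and> j < P' + K then s ! j else 0)"
      using Cons.IH by blast
    thus ?thesis using Suc by (simp add: sum.lessThan_Suc_shift del: sum.lessThan_Suc cong: if_cong)
  qed
qed

lemma utility_FC:
  assumes r: "r \<in> permutations_of_set {0..<length s}" and a: "a < length k"
  shows "utility s (replicate (length k) r) k a = seg s k a"
proof -
  have d: "distinct r" and sr: "set r = {0..<length s}" using r by (auto simp: permutations_of_set_def)
  have lr: "length r = length s" using d sr distinct_card by fastforce
  have "picking k (replicate (length k) r) {0..<length s} = segs k 0 r"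
    using picking_segs[OF d, of k 0] sr by simp
  then have B: "picking k (replicate (length k) r) {0..<length s} ! a
      = set (take (k ! a) (drop (sum_list (take a k)) r))"
    using segs_nth[OF a] by simp
  have "utility s (replicate (length k) r) k a
     = (\<Sum>j<length s. if r ! j \<in> set (take (k ! a) (drop (sum_list (take a k)) r)) then s ! j else 0)"
    unfolding utility_def Let_def B using a by simp
  also have "\<dots> = (\<Sum>j<length s. if sum_list (take a k) \<le> j \<and> j < sum_list (take a k) + k ! a then s ! j else 0)"
    using mem_seg[OF d] lr by (intro sum.cong) auto
  also have "\<dots> = seg s k a" by (simp add: seg_def sum_take_drop)
  finally show ?thesis .
qed

lemma EU_FC_eq:
  assumes "a < n" "length k = n"
  shows "EU_FC n s k a = seg s k a"
proof -
  let ?Rs = "permutations_of_set {0..<length s}"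
  have fin: "finite ?Rs" by simp
  have c: "card ?Rs = fact (length s)" by (simp add: card_permutations_of_set)
  have "(\<Sum>r\<in>?Rs. utility s (replicate n r) k a) = (\<Sum>r\<in>?Rs. seg s k a)"
    using utility_FC assms by (intro sum.cong) auto
  also have "\<dots> = of_nat (card ?Rs) * seg s k a" by simp
  finally show ?thesis unfolding EU_FC_def Let_def using c by simp
qed

lemma SW_e_W: "is_pick_vector n (length s) k \<Longrightarrow> n \<ge> 1 \<Longrightarrow> SW_e_FC n s k = W True s k"
proof -
  assume p: "is_pick_vector n (length s) k" and n: "n \<ge> 1"
  have l: "length k = n" using p by (simp add: is_pick_vector_def)
  have "SW_e_FC n s k = Min ((\<lambda>a. seg s k a) ` {..<n})"
    unfolding SW_e_FC_def atLeast0LessThan using EU_FC_eq[OF _ l, of _ s] by (intro arg_cong[where f=Min] image_cong) auto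
  also have "\<dots> = W True s k" using W_min[of k s] l n by (metis Suc_le_eq length_greater_0_conv One_nat_def)
  finally show ?thesis .
qed

lemma SW_n_W: "is_pick_vector n (length s) k \<Longrightarrow> n \<ge> 1 \<Longrightarrow> SW_n_FC n s k = W False s k"
proof -
  assume p: "is_pick_vector n (length s) k" and n: "n \<ge> 1"
  have l: "length k = n" using p by (simp add: is_pick_vector_def)
  have "SW_n_FC n s k = (\<Prod>a<n. seg s k a)"
    unfolding SW_n_FC_def using EU_FC_eq[OF _ l] by simp
  also have "\<dots> = W False s k" using W_prod[of k s] l n by (metis Suc_le_eq length_greater_0_conv One_nat_def)
  finally show ?thesis .
qed

lemma comb_mono: "0 \<le> x \<Longrightarrow> y \<le> y' \<Longrightarrow> comb b x y \<le> comb b x y'"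
  by (auto simp: mult_left_mono min.coboundedI2)

definition opt :: "bool \<Rightarrow> nat \<Rightarrow> rat list \<Rightarrow> rat \<times> nat list \<Rightarrow> bool" where
  "opt b i xs r \<longleftrightarrow> length (snd r) = i \<and> sum_list (snd r) = length xs \<and> fst r = W b xs (snd r) \<and>
     (\<forall>ks'. length ks' = i \<and> sum_list ks' = length xs \<longrightarrow> W b xs ks' \<le> fst r)"

fun good :: "bool \<Rightarrow> nat \<Rightarrow> rat list \<Rightarrow> (rat \<times> nat list) list \<Rightarrow> bool" where
  "good b i [] R = (\<exists>r. R = [r] \<and> opt b i [] r)"
| "good b i (x # xs) R = (\<exists>r R'. R = r # R' \<and> opt b i (x # xs) r \<and> good b i xs R')"

lemma last_row_good: "good b 1 xs (last_row xs) \<and> last_row xs \<noteq> [] \<and> (\<exists>R. last_row xs = (sum_list xs, [length xs]) # R)"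
proof (induction xs)
  case Nil
  show ?case by (auto simp: opt_def length_Suc_conv)
next
  case (Cons x xs)
  then obtain R where R: "last_row xs = (sum_list xs, [length xs]) # R" by blast
  have o: "opt b 1 (x # xs) (x + sum_list xs, [Suc (length xs)])"
    by (auto simp: opt_def length_Suc_conv)
  show ?case using Cons R o by auto
qed

lemma good_hd: "good b i xs R \<Longrightarrow> \<exists>v ks R'. R = (v, ks) # R' \<and> opt b i xs (v, ks)"
  by (cases xs) auto

lemma best_lemma:
  assumes "good b i ys R" "i \<ge> 1" "0 \<le> a" "\<forall>y\<in>set ys. 0 \<le> y"
  shows "(\<exists>u \<le> length ys. \<exists>ks'. snd (best b a t ys R) = (t + u) # ks' \<and> length ks' = i \<and>
            sum_list ks' = length ys - u \<and>
            fst (best b a t ys R) = comb b (a + sum_list (take u ys)) (W b (drop u ys) ks')) \<and>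
         (\<forall>u \<le> length ys. \<forall>ks'. length ks' = i \<and> sum_list ks' = length ys - u \<longrightarrow>
            comb b (a + sum_list (take u ys)) (W b (drop u ys) ks') \<le> fst (best b a t ys R))"
  using assms
proof (induction ys arbitrary: a t R)
  case Nil
  then obtain v ks where R: "R = [(v, ks)]" and o: "opt b i [] (v, ks)" by auto
  show ?case
  proof (intro conjI)
    show "\<exists>u \<le> length ([]::rat list). \<exists>ks'. snd (best b a t [] R) = (t + u) # ks' \<and> length ks' = i \<and>
            sum_list ks' = length ([]::rat list) - u \<and>
            fst (best b a t [] R) = comb b (a + sum_list (take u [])) (W b (drop u []) ks')"
      using R o by (auto simp: opt_def)
    show "\<forall>u \<le> length ([]::rat list). \<forall>ks'. length ks' = i \<and> sum_list ks' = length ([]::rat list) - u \<longrightarrow>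
            comb b (a + sum_list (take u [])) (W b (drop u []) ks') \<le> fst (best b a t [] R)"
    proof (intro allI impI)
      fix u ks' assume "u \<le> length ([]::rat list)" "length ks' = i \<and> sum_list ks' = length ([]::rat list) - u"
      hence "W b [] ks' \<le> v" and u0: "u = 0" using o by (auto simp: opt_def)
      hence "comb b a (W b [] ks') \<le> comb b a v" using Nil.prems(3) by (intro comb_mono)
      thus "comb b (a + sum_list (take u [])) (W b (drop u []) ks') \<le> fst (best b a t [] R)"
        using R u0 by simp
    qed
  qed
next
  case (Cons y ys)
  then obtain v ks R' where R: "R = (v, ks) # R'" and o: "opt b i (y # ys) (v, ks)" and g: "good b i ys R'"
    by auto
  have ay: "0 \<le> a + y" using Cons.prems by auto
  have ysn: "\<forall>y\<in>set ys. 0 \<le> y" using Cons.prems(4) by simp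
  note IH = Cons.IH[OF g Cons.prems(2) ay ysn, of "Suc t"]
  define c where "c = (comb b a v, t # ks)"
  define d where "d = best b (a + y) (Suc t) ys R'"
  have bst: "best b a t (y # ys) R = (if fst c < fst d then d else c)"
    using R by (simp add: c_def d_def Let_def)
  have ge_c: "fst c \<le> fst (best b a t (y # ys) R)" and ge_d: "fst d \<le> fst (best b a t (y # ys) R)"
    using bst by auto
  show ?case
  proof (intro conjI)
    show "\<exists>u \<le> length (y # ys). \<exists>ks'. snd (best b a t (y # ys) R) = (t + u) # ks' \<and> length ks' = i \<and>
            sum_list ks' = length (y # ys) - u \<and>
            fst (best b a t (y # ys) R) = comb b (a + sum_list (take u (y # ys))) (W b (drop u (y # ys)) ks')"
    proof (cases "fst c < fst d")
      case False
      then show ?thesis using bst o by (intro exI[of _ 0]) (auto simp: c_def opt_def)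
    next
      case True
      from IH obtain u ks' where u: "u \<le> length ys" "snd d = (Suc t + u) # ks'" "length ks' = i"
        "sum_list ks' = length ys - u" "fst d = comb b (a + y + sum_list (take u ys)) (W b (drop u ys) ks')"
        unfolding d_def by blast
      show ?thesis using True bst u by (intro exI[of _ "Suc u"]) (auto simp: add.assoc)
    qed
    show "\<forall>u \<le> length (y # ys). \<forall>ks'. length ks' = i \<and> sum_list ks' = length (y # ys) - u \<longrightarrow>
            comb b (a + sum_list (take u (y # ys))) (W b (drop u (y # ys)) ks') \<le> fst (best b a t (y # ys) R)"
    proof (intro allI impI)
      fix u ks'
      assume u: "u \<le> length (y # ys)" and k: "length ks' = i \<and> sum_list ks' = length (y # ys) - u"
      show "comb b (a + sum_list (take u (y # ys))) (W b (drop u (y # ys)) ks') \<le> fst (best b a t (y # ys) R)"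
      proof (cases u)
        case 0
        have "W b (y # ys) ks' \<le> v" using o k 0 by (auto simp: opt_def)
        hence "comb b a (W b (y # ys) ks') \<le> fst c" unfolding c_def using Cons.prems(3) comb_mono by simp
        thus ?thesis using ge_c 0 by simp
      next
        case (Suc u')
        have "comb b (a + y + sum_list (take u' ys)) (W b (drop u' ys) ks') \<le> fst d"
          using IH u k Suc unfolding d_def by auto
        thus ?thesis using ge_d Suc by (simp add: add.assoc)
      qed
    qed
  qed
qed

lemma next_row_good:
  assumes "good b i xs R" "i \<ge> 1" "\<forall>y\<in>set xs. 0 \<le> y"
  shows "good b (Suc i) xs (next_row b xs R)"
  using assms
proof (induction xs arbitrary: R)
  case Nil
  note B = best_lemma[OF Nil.prems(1,2), of 0 0]
  obtain v ks where vk: "best b 0 0 [] R = (v, ks)" by force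
  from B vk obtain ks' where u: "ks = 0 # ks'" "length ks' = i"
    "sum_list ks' = 0" "v = comb b 0 (W b [] ks')"
    by auto
  have ne: "ks' \<noteq> []" using u(2) Nil.prems(2) by auto
  have "opt b (Suc i) [] (v, ks)"
    unfolding opt_def
  proof (intro conjI allI impI)
    show "length (snd (v, ks)) = Suc i" using u by simp
    show "sum_list (snd (v, ks)) = length ([]::rat list)" using u by simp
    show "fst (v, ks) = W b [] (snd (v, ks))" using u ne by (simp add: W_cons)
    fix ks2 assume k2: "length ks2 = Suc i \<and> sum_list ks2 = length ([]::rat list)"
    then obtain u2 ks2' where ks2: "ks2 = u2 # ks2'" by (cases ks2) auto
    have ne2: "ks2' \<noteq> []" using k2 ks2 Nil.prems(2) by auto
    have "u2 \<le> length ([]::rat list)" using k2 ks2 by simp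
    moreover have "length ks2' = i \<and> sum_list ks2' = length ([]::rat list) - u2" using k2 ks2 by auto
    ultimately have "comb b (0 + sum_list (take u2 [])) (W b (drop u2 []) ks2') \<le> v"
      using B vk by auto
    thus "W b [] ks2 \<le> fst (v, ks)" using ks2 ne2 by (simp add: W_cons)
  qed
  moreover have "next_row b [] R = [best b 0 0 [] R]" by simp
  ultimately show ?case by (simp add: vk)
next
  case (Cons x xs)
  then obtain r R' where R: "R = r # R'" and g: "good b i xs R'" by auto
  have IH: "good b (Suc i) xs (next_row b xs R')" using Cons.IH g Cons.prems by auto
  note B = best_lemma[OF Cons.prems(1,2) order_refl Cons.prems(3), of 0]
  obtain v ks where vk: "best b 0 0 (x # xs) R = (v, ks)" by force
  from B vk obtain u ks' where u: "u \<le> length (x # xs)" "ks = u # ks'" "length ks' = i"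
    "sum_list ks' = length (x # xs) - u" "v = comb b (sum_list (take u (x # xs))) (W b (drop u (x # xs)) ks')"
    using Cons.prems by auto
  have ne: "ks' \<noteq> []" using u(3) Cons.prems(2) by auto
  have "opt b (Suc i) (x # xs) (v, ks)"
    unfolding opt_def
  proof (intro conjI allI impI)
    show "length (snd (v, ks)) = Suc i" using u by simp
    show "sum_list (snd (v, ks)) = length (x # xs)" using u by simp
    show "fst (v, ks) = W b (x # xs) (snd (v, ks))" using u ne by (simp add: W_cons)
    fix ks2 assume k2: "length ks2 = Suc i \<and> sum_list ks2 = length (x # xs)"
    then obtain u2 ks2' where ks2: "ks2 = u2 # ks2'" by (cases ks2) auto
    have ne2: "ks2' \<noteq> []" using k2 ks2 Cons.prems(2) by auto
    have "u2 \<le> length (x # xs)" using k2 ks2 by simp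
    moreover have "length ks2' = i \<and> sum_list ks2' = length (x # xs) - u2" using k2 ks2 by auto
    ultimately have "comb b (0 + sum_list (take u2 (x # xs))) (W b (drop u2 (x # xs)) ks2') \<le> v"
      using B vk by auto
    thus "W b (x # xs) ks2 \<le> fst (v, ks)" using ks2 ne2 by (simp add: W_cons)
  qed
  thus ?case using R IH vk by simp
qed

lemma iter_rows_good:
  "good b i xs R \<Longrightarrow> i \<ge> 1 \<Longrightarrow> \<forall>y\<in>set xs. 0 \<le> y \<Longrightarrow> good b (i + j) xs (iter_rows b j xs R)"
proof (induction j arbitrary: i R)
  case 0 thus ?case by simp
next
  case (Suc j)
  have "good b (Suc i + j) xs (iter_rows b j xs (next_row b xs R))"
    using Suc.IH[OF next_row_good[OF Suc.prems]] Suc.prems by auto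
  thus ?case by simp
qed

lemma opt_pick_opt:
  assumes "n \<ge> 1" "\<forall>y\<in>set s. 0 \<le> y"
  shows "is_pick_vector n (length s) (opt_pick b n s) \<and>
    (\<forall>k. is_pick_vector n (length s) k \<longrightarrow> W b s k \<le> W b s (opt_pick b n s))"
proof -
  have "good b (1 + (n - 1)) s (iter_rows b (n - 1) s (last_row s))"
    using iter_rows_good[OF conjunct1[OF last_row_good] _ assms(2)] by simp
  hence g: "good b n s (iter_rows b (n - 1) s (last_row s))" using assms(1) by simp
  from good_hd[OF g] obtain v ks R' where R: "iter_rows b (n - 1) s (last_row s) = (v, ks) # R'"
    and o: "opt b n s (v, ks)" by blast
  have op: "opt_pick b n s = ks" using R by simp
  show ?thesis using o unfolding op opt_def is_pick_vector_def by auto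
qed

lemma T_best_bound: "T_best b a t xs R \<le> 4 * length xs + 2"
  by (induction b a t xs R rule: T_best.induct) auto

lemma T_next_row_bound: "T_next_row b xs R \<le> 4 * (length xs + 1)^2"
proof (induction b xs R rule: T_next_row.induct)
  case (1 b R) thus ?case using T_best_bound[of b 0 0 "[]" R] by simp
next
  case (2 b x xs r R)
  have "T_best b 0 0 (x # xs) (r # R) \<le> 4 * length (x#xs) + 2" by (rule T_best_bound)
  thus ?case using 2 by (simp add: power2_eq_square algebra_simps)
next
  case (3 b x xs) thus ?case by simp
qed

lemma T_iter_rows_bound: "T_iter_rows b i s R \<le> i * (4 * (length s + 1)^2 + 1) + 1"
proof (induction i arbitrary: R)
  case 0 thus ?case by simp
next
  case (Suc i)
  show ?case using Suc.IH[of "next_row b s R"] T_next_row_bound[of b s R] by simp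
qed

lemma T_last_row_eq: "T_last_row s = length s + 1"
  by (induction s) auto

lemma T_opt_pick_bound: "n \<ge> 1 \<Longrightarrow> T_opt_pick b n s \<le> 8 * n * (length s + 1)^2"
proof -
  assume n: "n \<ge> 1"
  let ?M = "(length s + 1)^2"
  have M: "length s + 1 \<le> ?M" by (simp add: power2_eq_square)
  have M1: "1 \<le> ?M" by simp
  have "T_opt_pick b n s \<le> (length s + 1) + ((n - 1) * (4 * ?M + 1) + 1) + 1 + 1"
    using T_iter_rows_bound[of b "n - 1" s "last_row s"] by (simp add: T_last_row_eq)
  also have "\<dots> \<le> 8 * ?M + (n - 1) * (8 * ?M)"
  proof -
    have "(n - 1) * (4 * ?M + 1) \<le> (n - 1) * (8 * ?M)" using M1 by (intro mult_le_mono) auto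
    thus ?thesis using M M1 by linarith
  qed
  also have "\<dots> = n * (8 * ?M)" using n by (cases n) auto
  also have "\<dots> = 8 * n * ?M" by simp
  finally show ?thesis .
qed

theorem theorem1:
  "\<exists>C::nat. \<forall>n s. n \<ge> 1 \<and> scoring_vector s \<longrightarrow>
     (is_pick_vector n (length s) (opt_pick True n s) \<and>
      (\<forall>k. is_pick_vector n (length s) k \<longrightarrow>
             SW_e_FC n s k \<le> SW_e_FC n s (opt_pick True n s)) \<and>
      T_opt_pick True n s \<le> C * n * (length s + 1)^2) \<and>
     (is_pick_vector n (length s) (opt_pick False n s) \<and>
      (\<forall>k. is_pick_vector n (length s) k \<longrightarrow>
             SW_n_FC n s k \<le> SW_n_FC n s (opt_pick False n s)) \<and>
      T_opt_pick False n s \<le> C * n * (length s + 1)^2)"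
proof (intro exI[of _ 8] allI impI)
  fix n :: nat and s :: "rat list" assume h: "n \<ge> 1 \<and> scoring_vector s"
  hence n: "n \<ge> 1" and nn: "\<forall>y\<in>set s. 0 \<le> y" by (auto simp: scoring_vector_def)
  note OT = opt_pick_opt[OF n nn, of True] and OF = opt_pick_opt[OF n nn, of False]
  show "(is_pick_vector n (length s) (opt_pick True n s) \<and>
      (\<forall>k. is_pick_vector n (length s) k \<longrightarrow>
             SW_e_FC n s k \<le> SW_e_FC n s (opt_pick True n s)) \<and>
      T_opt_pick True n s \<le> 8 * n * (length s + 1)^2) \<and>
     (is_pick_vector n (length s) (opt_pick False n s) \<and>
      (\<forall>k. is_pick_vector n (length s) k \<longrightarrow>
             SW_n_FC n s k \<le> SW_n_FC n s (opt_pick False n s)) \<and>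
      T_opt_pick False n s \<le> 8 * n * (length s + 1)^2)"
    using OT OF SW_e_W[OF _ n] SW_n_W[OF _ n] T_opt_pick_bound[OF n] by auto
qed

end
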